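(* Let $\mathbf v\in\mathbb R^{n\times m}_{<0}$, $\mathbf b\in\mathbb R^n_{<0}$, and let $\mathbf z$ be an allocation. The following are equivalent: (1) $\mathbf z$ is competitive for $(\mathbf v,\mathbf b)$; (2) $\mathbf u(\mathbf z)\in\mathbb R^n_{<0}$ and $z_{i,j}>0$ implies $\frac{v_{i,j}b_i}{u_i(\mathbf z_i)}\ge\frac{v_{i',j}b_{i'}}{u_{i'}(\mathbf z_{i'})}$ for all $i'\in[n]$; (3) $\mathbf u(\mathbf z)\in\mathbb R^n_{<0}$ and $\mathbf y=\mathbf z$ maximizes $W_\tau(\mathbf y)=\sum_i\tau_iu_i(\mathbf y_i)$ over all allocations $\mathbf y$, where $\tau_i=b_i/u_i(\mathbf z_i)$; (4) $\mathbf u(\mathbf z)\in\mathbb R^n_{<0}$, $\mathbf u(\mathbf z)$ lies on the Pareto frontier $\mathcal U^*(\mathbf v)$, and $\mathbf u(\mathbf z)$ is a critical point of the Nash product $\mathcal N_{\mathbf b}(\mathbf u)=\prod_i|u_i|^{|b_i|}$ on $\mathcal U(\mathbf v)$.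
   Context: Agents $[n]$, chores $[m]$, allocations $\mathbf z\in\mathbb R^{n\times m}_{\ge0}$ with column sums $1$; $u_i(\mathbf z_i)=\sum_jv_{i,j}z_{i,j}$, $\mathbf u(\mathbf z)=(u_i(\mathbf z_i))_i$; $\mathcal U(\mathbf v)=\{\mathbf u(\mathbf z):\mathbf z\text{ allocation}\}$ and $\mathcal U^*(\mathbf v)$ the set of utility profiles of Pareto optimal allocations. $\mathbf z$ is competitive for $(\mathbf v,\mathbf b)$ if there exist prices $\mathbf p\in\mathbb R^m_{<0}$ such that each $\mathbf z_i$ maximizes $u_i$ over bundles $\mathbf x\in\mathbb R^m_{\ge0}$ with $\sum_jp_jx_j\le b_i$. A point $\mathbf u\in\mathcal U(\mathbf v)\cap\mathbb R^n_{<0}$ is a critical point of a smooth function $f$ on the convex set $\mathcal U(\mathbf v)$ if the tangent hyperplane at $\mathbf u$ to the level set of $f$ through $\mathbf u$ is a supporting hyperplane of $\mathcal U(\mathbf v)$. *)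

theory Defs
  imports "HOL-Analysis.Analysis"
begin

text \<open>Agents are the elements of a finite type 'n, chores the elements of a finite
  type 'm. Valuations v, budgets b, allocations z are real-valued functions;
  utility profiles are vectors in real^'n.\<close>

definition allocation :: "('n::finite \<Rightarrow> 'm::finite \<Rightarrow> real) \<Rightarrow> bool" where
  "allocation z \<longleftrightarrow> (\<forall>i j. z i j \<ge> 0) \<and> (\<forall>j. (\<Sum>i\<in>UNIV. z i j) = 1)"

definition util :: "('n::finite \<Rightarrow> 'm::finite \<Rightarrow> real) \<Rightarrow> 'n \<Rightarrow> ('m \<Rightarrow> real) \<Rightarrow> real" where
  "util v i x = (\<Sum>j\<in>UNIV. v i j * x j)"

definition uprof :: "('n::finite \<Rightarrow> 'm::finite \<Rightarrow> real) \<Rightarrow> ('n \<Rightarrow> 'm \<Rightarrow> real) \<Rightarrow> real^'n" where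
  "uprof v z = (\<chi> i. util v i (z i))"

definition utility_set :: "('n::finite \<Rightarrow> 'm::finite \<Rightarrow> real) \<Rightarrow> (real^'n) set" where
  "utility_set v = {uprof v z | z. allocation z}"

definition pareto_optimal :: "('n::finite \<Rightarrow> 'm::finite \<Rightarrow> real) \<Rightarrow> ('n \<Rightarrow> 'm \<Rightarrow> real) \<Rightarrow> bool" where
  "pareto_optimal v z \<longleftrightarrow> allocation z \<and>
     \<not> (\<exists>y. allocation y \<and> (\<forall>i. util v i (y i) \<ge> util v i (z i))
              \<and> (\<exists>i. util v i (y i) > util v i (z i)))"

definition pareto_frontier :: "('n::finite \<Rightarrow> 'm::finite \<Rightarrow> real) \<Rightarrow> (real^'n) set" where
  "pareto_frontier v = {uprof v z | z. pareto_optimal v z}"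

definition competitive :: "('n::finite \<Rightarrow> 'm::finite \<Rightarrow> real) \<Rightarrow> ('n \<Rightarrow> real) \<Rightarrow> ('n \<Rightarrow> 'm \<Rightarrow> real) \<Rightarrow> bool" where
  "competitive v b z \<longleftrightarrow> allocation z \<and>
     (\<exists>p :: 'm \<Rightarrow> real. (\<forall>j. p j < 0) \<and>
        (\<forall>i. (\<forall>j. z i j \<ge> 0) \<and> (\<Sum>j\<in>UNIV. p j * z i j) \<le> b i \<and>
             (\<forall>x :: 'm \<Rightarrow> real. (\<forall>j. x j \<ge> 0) \<and> (\<Sum>j\<in>UNIV. p j * x j) \<le> b i
                 \<longrightarrow> util v i x \<le> util v i (z i))))"

text \<open>Critical point of a smooth function f on a convex set U: the tangent hyperplane
  at u to the level set of f through u (normal = gradient g, which must be nonzero)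
  is a supporting hyperplane of U, i.e. U lies in one of its closed half-spaces.\<close>

definition critical_point :: "(real^'n::finite \<Rightarrow> real) \<Rightarrow> (real^'n) set \<Rightarrow> real^'n \<Rightarrow> bool" where
  "critical_point f U u \<longleftrightarrow> u \<in> U \<and> (\<forall>i. u $ i < 0) \<and>
     (\<exists>g. (f has_derivative (\<lambda>h. g \<bullet> h)) (at u) \<and> g \<noteq> 0 \<and>
          ((\<forall>w\<in>U. g \<bullet> (w - u) \<le> 0) \<or> (\<forall>w\<in>U. g \<bullet> (w - u) \<ge> 0)))"

definition nash_product :: "('n::finite \<Rightarrow> real) \<Rightarrow> real^'n \<Rightarrow> real" where
  "nash_product b u = (\<Prod>i\<in>UNIV. \<bar>u $ i\<bar> powr \<bar>b i\<bar>)"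

end

theory Submission
  imports Defs
begin

definition shift :: "('n::finite \<Rightarrow> 'm::finite \<Rightarrow> real) \<Rightarrow> 'n \<Rightarrow> 'm \<Rightarrow> 'n \<Rightarrow> real \<Rightarrow> ('n \<Rightarrow> 'm \<Rightarrow> real)" where
  "shift z a c a' t = (\<lambda>k l. z k l + t * ((if k = a' \<and> l = c then 1 else 0) - (if k = a \<and> l = c then 1 else 0)))"

lemma sum_ind2: "(\<Sum>k\<in>(UNIV::'n::finite set). (if k = a \<and> l = c then (1::real) else 0)) = (if l = c then 1 else 0)"
  by (cases "l = c") auto

lemma shift_col: "(\<Sum>k\<in>UNIV. shift z a c a' t k l) = (\<Sum>k\<in>UNIV. z k l)"
  by (simp add: shift_def sum.distrib sum_subtractf sum_distrib_left[symmetric] right_diff_distrib sum_ind2 del: sum_distrib_left)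

lemma shift_util: "util v k (shift z a c a' t k) = util v k (z k) + t * ((if k = a' then v a' c else 0) - (if k = a then v a c else 0))"
proof -
  have "util v k (shift z a c a' t k) = (\<Sum>l\<in>UNIV. v k l * z k l + t * ((if k = a' \<and> l = c then v k l else 0) - (if k = a \<and> l = c then v k l else 0)))"
    unfolding util_def shift_def by (intro sum.cong) (auto simp: algebra_simps)
  also have "\<dots> = util v k (z k) + t * ((if k = a' then v a' c else 0) - (if k = a then v a c else 0))"
    unfolding util_def by (simp add: sum.distrib sum_subtractf sum_distrib_left[symmetric] del: sum_distrib_left)
  finally show ?thesis .
qed

lemma shift_W: "(\<Sum>k\<in>UNIV. tau k * util v k (shift z a c a' t k)) = (\<Sum>k\<in>UNIV. tau k * util v k (z k)) + t * (tau a' * v a' c - tau a * v a c)"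
proof -
  have "\<And>k. tau k * util v k (shift z a c a' t k) = tau k * util v k (z k) + t * ((if k = a' then tau a' * v a' c else 0) - (if k = a then tau a * v a c else 0))"
    by (simp add: shift_util algebra_simps)
  then show ?thesis by (simp add: sum.distrib sum_subtractf sum_distrib_left[symmetric] del: sum_distrib_left)
qed

lemma shift_alloc: assumes "allocation z" "0 \<le> t" "t \<le> z a c" shows "allocation (shift z a c a' t)"
  using assms unfolding allocation_def
  apply (simp add: shift_col)
  apply (auto simp: shift_def)
  done

lemma factor_deriv:
  fixes u :: "real^'n::finite"
  assumes "u $ i < 0"
  shows "((\<lambda>w. \<bar>w $ i\<bar> powr c) has_derivative (\<lambda>h. (\<bar>u $ i\<bar> powr c) * (h $ i * c / u $ i))) (at u)"
proof -
  have d: "((\<lambda>w. (- (w $ i)) powr c) has_derivative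
      (\<lambda>h. ((- (u $ i)) powr c) * ((\<lambda>h. 0) h * ln (- (u $ i)) + (\<lambda>h. - (h $ i)) h * c / (- (u $ i))))) (at u)"
    proof (rule has_derivative_powr)
      show "((\<lambda>w. - (w $ i)) has_derivative (\<lambda>h. - (h $ i))) (at u)"
        by (intro derivative_intros bounded_linear_imp_has_derivative bounded_linear_vec_nth)
      show "((\<lambda>w. c) has_derivative (\<lambda>h. 0)) (at u)" by (rule has_derivative_const)
    qed (use assms in auto)
  have d2: "((\<lambda>w. (- (w $ i)) powr c) has_derivative (\<lambda>h. (\<bar>u $ i\<bar> powr c) * (h $ i * c / u $ i))) (at u)"
    proof -
    have a: "\<bar>u $ i\<bar> = - (u $ i)" using assms by simp
    show ?thesis using d by (simp add: a)
  qed
  have o: "open {w::real^'n. w $ i < 0}"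
    by (intro open_Collect_less continuous_intros)
  show ?thesis
    by (rule has_derivative_transform_within_open[OF d2 o]) (use assms in auto)
qed

lemma nash_deriv:
  fixes u :: "real^'n::finite"
  assumes "\<forall>i. u $ i < 0"
  shows "(nash_product b has_derivative (\<lambda>h. (\<chi> i. nash_product b u * \<bar>b i\<bar> / u $ i) \<bullet> h)) (at u)"
proof -
  have "((\<lambda>w. \<Prod>i\<in>UNIV. \<bar>w $ i\<bar> powr \<bar>b i\<bar>) has_derivative
     (\<lambda>h. \<Sum>i\<in>UNIV. (\<bar>u $ i\<bar> powr \<bar>b i\<bar>) * (h $ i * \<bar>b i\<bar> / u $ i) * (\<Prod>j\<in>UNIV - {i}. \<bar>u $ j\<bar> powr \<bar>b j\<bar>))) (at u)"
    by (rule has_derivative_prod) (use assms factor_deriv in auto)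
  moreover have "\<And>h. (\<Sum>i\<in>UNIV. (\<bar>u $ i\<bar> powr \<bar>b i\<bar>) * (h $ i * \<bar>b i\<bar> / u $ i) * (\<Prod>j\<in>UNIV - {i}. \<bar>u $ j\<bar> powr \<bar>b j\<bar>))
      = (\<chi> i. nash_product b u * \<bar>b i\<bar> / u $ i) \<bullet> h"
  proof -
    fix h :: "real^'n"
    have "(\<bar>u $ i\<bar> powr \<bar>b i\<bar>) * (\<Prod>j\<in>UNIV - {i}. \<bar>u $ j\<bar> powr \<bar>b j\<bar>) = nash_product b u" for i
      unfolding nash_product_def by (subst prod.remove[of UNIV i]) auto
    note eq = this
    have "\<And>i. (\<bar>u $ i\<bar> powr \<bar>b i\<bar>) * (h $ i * \<bar>b i\<bar> / u $ i) * (\<Prod>j\<in>UNIV - {i}. \<bar>u $ j\<bar> powr \<bar>b j\<bar>)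
        = ((\<bar>u $ i\<bar> powr \<bar>b i\<bar>) * (\<Prod>j\<in>UNIV - {i}. \<bar>u $ j\<bar> powr \<bar>b j\<bar>)) * (h $ i * \<bar>b i\<bar> / u $ i)"
      by (simp only: ac_simps)
    also have "\<And>i. ((\<bar>u $ i\<bar> powr \<bar>b i\<bar>) * (\<Prod>j\<in>UNIV - {i}. \<bar>u $ j\<bar> powr \<bar>b j\<bar>)) * (h $ i * \<bar>b i\<bar> / u $ i)
        = (\<chi> i. nash_product b u * \<bar>b i\<bar> / u $ i) $ i * h $ i"
      by (simp only: eq vec_lambda_beta) simp
    finally show "?thesis h"
      unfolding inner_vec_def inner_real_def by (intro sum.cong) auto
  qed
  ultimately show ?thesis unfolding nash_product_def[abs_def] by simp
qed

lemma util_le0: assumes "\<forall>j. v i j < 0" "\<forall>j. x j \<ge> 0" shows "util v i x \<le> 0"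
  unfolding util_def using assms by (intro sum_nonpos) (simp add: mult_nonpos_nonneg less_imp_le)

lemma util_lt0: assumes "\<forall>j. v i j < 0" "\<forall>j. x j \<ge> 0" "x j > 0" shows "util v i x < 0"
proof -
  have "util v i x = v i j * x j + (\<Sum>l\<in>UNIV - {j}. v i l * x l)"
    unfolding util_def by (subst sum.remove[of UNIV j]) auto
  also have "(\<Sum>l\<in>UNIV - {j}. v i l * x l) \<le> 0"
    using assms by (intro sum_nonpos) (simp add: mult_nonpos_nonneg less_imp_le)
  moreover have "v i j * x j < 0" using assms by (simp add: mult_neg_pos)
  ultimately show ?thesis by linarith
qed

lemma ex_pos: assumes "\<forall>j. x j \<ge> (0::real)" "util v i x \<noteq> 0" shows "\<exists>j. x j > 0"
proof (rule ccontr)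
  assume "\<not> ?thesis"
  then have "\<forall>j. x j = 0" using assms(1) by (metis antisym not_less)
  then show False using assms(2) by (simp add: util_def)
qed

lemma col_pos: assumes "allocation z" shows "\<exists>i. z i j > 0"
proof (rule ccontr)
  assume "\<not> ?thesis"
  then have "\<forall>i. z i j = 0" using assms unfolding allocation_def by (metis antisym not_less)
  then have "(\<Sum>i\<in>UNIV. z i j) = 0" by simp
  then show False using assms unfolding allocation_def by simp
qed

lemma sum_move: fixes f y :: "'m::finite \<Rightarrow> real"
  shows "(\<Sum>l\<in>UNIV. f l * (y l - (if l = j then a else 0) + (if l = k then c else 0))) = (\<Sum>l\<in>UNIV. f l * y l) - f j * a + f k * c"
proof -
  have "(\<Sum>l\<in>UNIV. f l * (y l - (if l = j then a else 0) + (if l = k then c else 0)))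
      = (\<Sum>l\<in>UNIV. f l * y l - (if l = j then f j * a else 0) + (if l = k then f k * c else 0))"
    by (intro sum.cong) (auto simp: algebra_simps)
  then show ?thesis by (simp add: sum.distrib sum_subtractf)
qed

lemma util_pos_alloc: "allocation z \<Longrightarrow> \<forall>j. z i j \<ge> 0" by (simp add: allocation_def)

lemma stepA:
  fixes v :: "'n::finite \<Rightarrow> 'm::finite \<Rightarrow> real"
  assumes v_neg: "\<forall>i j. v i j < 0" and b_neg: "\<forall>i. b i < 0" and comp: "competitive v b z"
  shows "(\<forall>i. util v i (z i) < 0) \<and>
         (\<forall>i j. z i j > 0 \<longrightarrow> (\<forall>i'. v i j * b i / util v i (z i) \<ge> v i' j * b i' / util v i' (z i')))"
proof -
  obtain p where pneg: "\<forall>j. p j < 0" and H: "\<forall>i. (\<forall>j. z i j \<ge> 0) \<and> (\<Sum>j\<in>UNIV. p j * z i j) \<le> b i \<and>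
             (\<forall>x :: 'm \<Rightarrow> real. (\<forall>j. x j \<ge> 0) \<and> (\<Sum>j\<in>UNIV. p j * x j) \<le> b i
                 \<longrightarrow> util v i x \<le> util v i (z i))"
    using comp unfolding competitive_def by blast
  have uneg: "util v i (z i) < 0" for i
  proof -
    have "\<exists>j. z i j > 0"
    proof (rule ccontr)
      assume nz: "\<not> ?thesis"
      have zi0: "\<forall>j. z i j \<ge> 0" using H by blast
      have "\<forall>j. z i j = 0" using zi0 nz by (metis antisym not_less)
      then have "(\<Sum>j\<in>UNIV. p j * z i j) = 0" by simp
      moreover have "(\<Sum>j\<in>UNIV. p j * z i j) \<le> b i" using H by blast
      ultimately show False using b_neg[rule_format, of i] by linarith
    qed
    then show ?thesis using util_lt0 v_neg H by blast
  qed
  have test1: "v i' j * b i' / util v i' (z i') \<le> p j" for i' j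
  proof -
    define x where "x = (\<lambda>l. if l = j then b i' / p j else 0)"
    have x0: "\<forall>l. x l \<ge> 0" unfolding x_def using pneg b_neg
      by (simp add: divide_nonpos_neg less_imp_le)
    have "(\<Sum>l\<in>UNIV. p l * x l) = b i'" unfolding x_def using pneg[rule_format, of j]
      by (simp add: if_distrib cong: if_cong)
    then have "util v i' x \<le> util v i' (z i')" using H x0 by simp
    moreover have "util v i' x = v i' j * (b i' / p j)" unfolding util_def x_def
      by (simp add: if_distrib cong: if_cong)
    ultimately have "v i' j * (b i' / p j) \<le> util v i' (z i')" by simp
    then show ?thesis using pneg[rule_format, of j] uneg[of i']
      by (simp add: neg_divide_le_eq neg_le_divide_eq mult.commute)
  qed
  have test2: "v i k * p j / p k \<le> v i j" if zij: "z i j > 0" for i j k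
  proof (cases "k = j")
    case True then show ?thesis using pneg[rule_format, of j] by simp
  next
    case False
    define x where "x = (\<lambda>l. z i l - (if l = j then z i j else 0) + (if l = k then z i j * p j / p k else 0))"
    have pos: "z i j * p j / p k \<ge> 0" using zij pneg[rule_format, of j] pneg[rule_format, of k]
      by (intro divide_nonpos_neg mult_nonneg_nonpos) auto
    have zi0: "\<forall>l. z i l \<ge> 0" using H by blast
    have x0: "\<forall>l. x l \<ge> 0" unfolding x_def using zi0 False pos by auto
    have "(\<Sum>l\<in>UNIV. p l * x l) = (\<Sum>l\<in>UNIV. p l * z i l) - p j * z i j + p k * (z i j * p j / p k)"
      unfolding x_def by (rule sum_move)
    also have "\<dots> = (\<Sum>l\<in>UNIV. p l * z i l)" using pneg[rule_format, of k] by (simp add: field_simps)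
    finally have "util v i x \<le> util v i (z i)" using H x0 by simp
    moreover have "util v i x = util v i (z i) - v i j * z i j + v i k * (z i j * p j / p k)"
      unfolding x_def util_def by (rule sum_move)
    ultimately have "z i j * (v i k * p j / p k) \<le> z i j * v i j" by (simp add: algebra_simps)
    then show ?thesis using zij by (metis mult_le_cancel_left_pos times_divide_eq_right)
  qed
  have test3: "p j \<le> v i j * b i / util v i (z i)" if zij: "z i j > 0" for i j
  proof -
    have "v i k \<le> (v i j / p j) * p k" for k
    proof -
      have "v i k * p j / p k \<le> v i j" using test2 zij by blast
      then show ?thesis using pneg[rule_format, of j] pneg[rule_format, of k]
        by (simp add: neg_divide_le_eq neg_le_divide_eq mult.commute)
    qed
    then have "util v i (z i) \<le> (\<Sum>k\<in>UNIV. (v i j / p j) * p k * z i k)"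
      unfolding util_def using H by (intro sum_mono mult_right_mono) auto
    also have "\<dots> = (v i j / p j) * (\<Sum>k\<in>UNIV. p k * z i k)"
      by (simp add: sum_distrib_left mult.assoc)
    also have "\<dots> \<le> (v i j / p j) * b i"
      using H pneg v_neg by (intro mult_left_mono) (auto simp: divide_neg_neg less_imp_le)
    finally have "util v i (z i) \<le> v i j / p j * b i" .
    then show ?thesis using pneg[rule_format, of j] uneg[of i]
      by (simp add: neg_divide_le_eq neg_le_divide_eq mult.commute)
  qed
  show ?thesis using uneg test1 test3 by (meson order_trans)
qed

lemma price:
  fixes v :: "'n::finite \<Rightarrow> 'm::finite \<Rightarrow> real"
  assumes v_neg: "\<forall>i j. v i j < 0" and b_neg: "\<forall>i. b i < 0" and alloc: "allocation z"
    and uneg: "\<forall>i. util v i (z i) < 0"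
    and cond: "\<forall>i j. z i j > 0 \<longrightarrow> (\<forall>i'. v i j * b i / util v i (z i) \<ge> v i' j * b i' / util v i' (z i'))"
  obtains p where "\<forall>j. p j < 0" "\<forall>i j. v i j * b i / util v i (z i) \<le> p j"
    "\<forall>i j. z i j > 0 \<longrightarrow> p j = v i j * b i / util v i (z i)"
proof -
  define s where "s j = (SOME i. z i j > 0)" for j
  have s: "z (s j) j > 0" for j unfolding s_def using col_pos[OF alloc] by (metis someI_ex)
  define p where "p j = v (s j) j * b (s j) / util v (s j) (z (s j))" for j
  have "\<forall>j. p j < 0" unfolding p_def using v_neg b_neg uneg by (simp add: divide_pos_neg mult_neg_neg)
  moreover have "\<forall>i j. v i j * b i / util v i (z i) \<le> p j" unfolding p_def using cond s by blast
  moreover have "p j \<le> v i j * b i / util v i (z i)" if "z i j > 0" for i j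
    unfolding p_def using cond that by blast
  ultimately have "\<forall>i j. z i j > 0 \<longrightarrow> p j = v i j * b i / util v i (z i)"
    by (meson order_antisym)
  then show ?thesis using that \<open>\<forall>j. p j < 0\<close> \<open>\<forall>i j. v i j * b i / util v i (z i) \<le> p j\<close> by blast
qed

lemma W_expand: "tau i * util v i (y i) = (\<Sum>j\<in>UNIV. (v i j * tau i) * y i j)"
  unfolding util_def by (simp add: sum_distrib_left algebra_simps)

lemma stepB:
  fixes v :: "'n::finite \<Rightarrow> 'm::finite \<Rightarrow> real"
  assumes v_neg: "\<forall>i j. v i j < 0" and b_neg: "\<forall>i. b i < 0" and alloc: "allocation z"
    and uneg: "\<forall>i. util v i (z i) < 0"
    and cond: "\<forall>i j. z i j > 0 \<longrightarrow> (\<forall>i'. v i j * b i / util v i (z i) \<ge> v i' j * b i' / util v i' (z i'))"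
  shows "competitive v b z"
proof -
  obtain p where pneg: "\<forall>j. p j < 0" and pmax: "\<forall>i j. v i j * b i / util v i (z i) \<le> p j"
    and peq: "\<forall>i j. z i j > 0 \<longrightarrow> p j = v i j * b i / util v i (z i)"
    using price[OF assms] by blast
  have z0: "\<forall>i j. z i j \<ge> 0" using alloc by (simp add: allocation_def)
  have budget: "(\<Sum>j\<in>UNIV. p j * z i j) = b i" for i
  proof -
    have "p j * z i j = (v i j * (b i / util v i (z i))) * z i j" for j
    proof (cases "z i j > 0")
      case True then show ?thesis using peq by simp
    next
      case False then have "z i j = 0" using z0 by (meson antisym not_less)
      then show ?thesis by simp
    qed
    then have "(\<Sum>j\<in>UNIV. p j * z i j) = (b i / util v i (z i)) * util v i (z i)"
      using W_expand[of "\<lambda>i. b i / util v i (z i)" i v z] by simp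
    also have "\<dots> = b i" using uneg[rule_format, of i] by simp
    finally show ?thesis .
  qed
  have opt: "util v i x \<le> util v i (z i)" if x0: "\<forall>j. x j \<ge> 0" and xb: "(\<Sum>j\<in>UNIV. p j * x j) \<le> b i" for i x
  proof -
    have "v i j \<le> p j * (util v i (z i) / b i)" for j
      using pmax[rule_format, of i j] b_neg[rule_format, of i] uneg[rule_format, of i]
      by (simp add: neg_divide_le_eq neg_le_divide_eq mult.commute divide_le_eq le_divide_eq)
    then have "util v i x \<le> (\<Sum>j\<in>UNIV. p j * (util v i (z i) / b i) * x j)"
      unfolding util_def using x0 by (intro sum_mono mult_right_mono) auto
    also have "\<dots> = (util v i (z i) / b i) * (\<Sum>j\<in>UNIV. p j * x j)"
      by (simp only: sum_distrib_left sum_distrib_right mult_ac)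
    also have "\<dots> \<le> (util v i (z i) / b i) * b i"
      using xb b_neg[rule_format, of i] uneg[rule_format, of i]
      by (intro mult_left_mono) (auto simp: divide_neg_neg less_imp_le)
    also have "\<dots> = util v i (z i)" using b_neg[rule_format, of i] by simp
    finally show ?thesis .
  qed
  show ?thesis unfolding competitive_def using alloc pneg z0 budget opt by (auto intro!: exI[of _ p])
qed

lemma stepC1:
  fixes v :: "'n::finite \<Rightarrow> 'm::finite \<Rightarrow> real"
  assumes v_neg: "\<forall>i j. v i j < 0" and b_neg: "\<forall>i. b i < 0" and alloc: "allocation z"
    and uneg: "\<forall>i. util v i (z i) < 0"
    and cond: "\<forall>i j. z i j > 0 \<longrightarrow> (\<forall>i'. v i j * b i / util v i (z i) \<ge> v i' j * b i' / util v i' (z i'))"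
    and tau: "tau = (\<lambda>i. b i / util v i (z i))"
  shows "\<forall>y. allocation y \<longrightarrow>
                   (\<Sum>i\<in>UNIV. tau i * util v i (y i)) \<le> (\<Sum>i\<in>UNIV. tau i * util v i (z i))"
proof (intro allI impI)
  fix y :: "'n \<Rightarrow> 'm \<Rightarrow> real" assume ay: "allocation y"
  obtain p where pneg: "\<forall>j. p j < 0" and pmax: "\<forall>i j. v i j * b i / util v i (z i) \<le> p j"
    and peq: "\<forall>i j. z i j > 0 \<longrightarrow> p j = v i j * b i / util v i (z i)"
    using price[OF v_neg b_neg alloc uneg cond] by blast
  have z0: "\<forall>i j. z i j \<ge> 0" using alloc by (simp add: allocation_def)
  have y0: "\<forall>i j. y i j \<ge> 0" using ay by (simp add: allocation_def)
  have vt: "v i j * tau i = v i j * b i / util v i (z i)" for i j unfolding tau by simp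
  have "(\<Sum>i\<in>UNIV. tau i * util v i (y i)) = (\<Sum>i\<in>UNIV. \<Sum>j\<in>UNIV. (v i j * tau i) * y i j)"
    by (simp add: W_expand)
  also have "\<dots> \<le> (\<Sum>i\<in>UNIV. \<Sum>j\<in>UNIV. p j * y i j)"
    using pmax y0 unfolding vt by (intro sum_mono mult_right_mono) auto
  also have "\<dots> = (\<Sum>j\<in>UNIV. p j * (\<Sum>i\<in>UNIV. y i j))"
    by (subst sum.swap) (simp add: sum_distrib_left)
  also have "\<dots> = (\<Sum>j\<in>UNIV. p j)" using ay by (simp add: allocation_def)
  also have "\<dots> = (\<Sum>j\<in>UNIV. p j * (\<Sum>i\<in>UNIV. z i j))" using alloc by (simp add: allocation_def)
  also have "\<dots> = (\<Sum>i\<in>UNIV. \<Sum>j\<in>UNIV. p j * z i j)"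
    by (subst sum.swap) (simp add: sum_distrib_left)
  also have "\<dots> = (\<Sum>i\<in>UNIV. \<Sum>j\<in>UNIV. (v i j * tau i) * z i j)"
  proof (intro sum.cong refl)
    fix i j
    show "p j * z i j = (v i j * tau i) * z i j"
    proof (cases "z i j > 0")
      case True then show ?thesis using peq unfolding vt by simp
    next
      case False then have "z i j = 0" using z0 by (meson antisym not_less)
      then show ?thesis by simp
    qed
  qed
  also have "\<dots> = (\<Sum>i\<in>UNIV. tau i * util v i (z i))"
    by (simp add: W_expand)
  finally show "(\<Sum>i\<in>UNIV. tau i * util v i (y i)) \<le> (\<Sum>i\<in>UNIV. tau i * util v i (z i))" .
qed

lemma min_cond:
  fixes v :: "'n::finite \<Rightarrow> 'm::finite \<Rightarrow> real"
  assumes alloc: "allocation z" and zij: "z i j > 0"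
    and opt: "\<forall>y. allocation y \<longrightarrow>
                   (\<Sum>i\<in>UNIV. tau i * util v i (y i)) \<le> (\<Sum>i\<in>UNIV. tau i * util v i (z i))"
  shows "tau i' * v i' j \<le> tau i * v i j"
proof -
  have "allocation (shift z i j i' (z i j))" using alloc zij by (intro shift_alloc) auto
  then have "(\<Sum>k\<in>UNIV. tau k * util v k (shift z i j i' (z i j) k)) \<le> (\<Sum>k\<in>UNIV. tau k * util v k (z k))"
    using opt by blast
  then have "z i j * (tau i' * v i' j - tau i * v i j) \<le> 0" by (simp add: shift_W)
  then show ?thesis using zij by (simp add: mult_le_0_iff)
qed

lemma stepC2:
  fixes v :: "'n::finite \<Rightarrow> 'm::finite \<Rightarrow> real"
  assumes alloc: "allocation z"
    and tau: "tau = (\<lambda>i. b i / util v i (z i))"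
    and opt: "\<forall>y. allocation y \<longrightarrow>
                   (\<Sum>i\<in>UNIV. tau i * util v i (y i)) \<le> (\<Sum>i\<in>UNIV. tau i * util v i (z i))"
  shows "\<forall>i j. z i j > 0 \<longrightarrow> (\<forall>i'. v i j * b i / util v i (z i) \<ge> v i' j * b i' / util v i' (z i'))"
  using min_cond[OF alloc _ opt] unfolding tau by (simp add: mult.commute)

lemma uprof_nth[simp]: "uprof v y $ i = util v i (y i)" by (simp add: uprof_def)

lemma inner_comp:
  fixes v :: "'n::finite \<Rightarrow> 'm::finite \<Rightarrow> real"
  assumes "\<forall>i. b i < 0" and un: "\<forall>i. util v i (z i) < 0" and tau: "tau = (\<lambda>i. b i / util v i (z i))"
  shows "(\<chi> i. N * \<bar>b i\<bar> / uprof v z $ i) \<bullet> (uprof v y - uprof v z)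
     = - N * ((\<Sum>i\<in>UNIV. tau i * util v i (y i)) - (\<Sum>i\<in>UNIV. tau i * util v i (z i)))"
proof -
  have "(\<chi> i. N * \<bar>b i\<bar> / uprof v z $ i) \<bullet> (uprof v y - uprof v z)
     = (\<Sum>i\<in>UNIV. - N * (tau i * util v i (y i) - tau i * util v i (z i)))"
    unfolding inner_vec_def inner_real_def
  proof (intro sum.cong refl)
    fix i
    have "\<bar>b i\<bar> = - b i" using assms(1)[rule_format, of i] by simp
    moreover have "util v i (z i) \<noteq> 0" using un by (metis less_irrefl)
    ultimately show "(\<chi> i. N * \<bar>b i\<bar> / uprof v z $ i) $ i * (uprof v y - uprof v z) $ i = - N * (tau i * util v i (y i) - tau i * util v i (z i))"
      by (simp add: tau field_simps)
  qed
  then show ?thesis by (simp only: sum_negf sum_distrib_left[symmetric] sum_subtractf)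
qed

lemma stepD:
  fixes v :: "'n::finite \<Rightarrow> 'm::finite \<Rightarrow> real"
  assumes v_neg: "\<forall>i j. v i j < 0" and b_neg: "\<forall>i. b i < 0" and alloc: "allocation z"
    and uneg: "\<forall>i. util v i (z i) < 0"
    and tau: "tau = (\<lambda>i. b i / util v i (z i))"
    and opt: "\<forall>y. allocation y \<longrightarrow>
                   (\<Sum>i\<in>UNIV. tau i * util v i (y i)) \<le> (\<Sum>i\<in>UNIV. tau i * util v i (z i))"
  shows "uprof v z \<in> pareto_frontier v \<and> critical_point (nash_product b) (utility_set v) (uprof v z)"
proof
  have taupos: "tau i > 0" for i unfolding tau using b_neg uneg by (simp add: divide_neg_neg)
  have "pareto_optimal v z"
    unfolding pareto_optimal_def
  proof (intro conjI alloc notI)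
    assume "\<exists>y. allocation y \<and> (\<forall>i. util v i (y i) \<ge> util v i (z i)) \<and> (\<exists>i. util v i (y i) > util v i (z i))"
    then obtain y where ay: "allocation y" and ge: "\<forall>i. util v i (y i) \<ge> util v i (z i)"
      and gt: "\<exists>i. util v i (y i) > util v i (z i)" by blast
    have "(\<Sum>i\<in>UNIV. tau i * util v i (z i)) < (\<Sum>i\<in>UNIV. tau i * util v i (y i))"
      using ge gt taupos by (intro sum_strict_mono_ex1) (auto intro: mult_left_mono mult_strict_left_mono less_imp_le)
    then show False using opt ay by (meson not_le)
  qed
  then show "uprof v z \<in> pareto_frontier v" unfolding pareto_frontier_def by blast
  let ?u = "uprof v z"
  let ?N = "nash_product b ?u"
  have un: "\<forall>i. ?u $ i < 0" using uneg by simp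
  have Npos: "?N > 0" unfolding nash_product_def
  proof (intro prod_pos)
    fix i show "0 < \<bar>?u $ i\<bar> powr \<bar>b i\<bar>" using un[rule_format, of i] by (simp add: powr_gt_zero)
  qed
  define g where "g = (\<chi> i. ?N * \<bar>b i\<bar> / ?u $ i)"
  have d: "(nash_product b has_derivative (\<lambda>h. g \<bullet> h)) (at ?u)" unfolding g_def by (rule nash_deriv[OF un])
  have gnz: "g \<noteq> 0"
  proof
    assume "g = 0"
    then have "g $ undefined = 0" by simp
    then show False unfolding g_def using Npos b_neg[rule_format, of undefined] uneg[rule_format, of undefined] by simp
  qed
  have sup: "\<forall>w\<in>utility_set v. g \<bullet> (w - ?u) \<ge> 0"
  proof
    fix w assume "w \<in> utility_set v"
    then obtain y where ay: "allocation y" and w: "w = uprof v y" unfolding utility_set_def by blast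
    have "g \<bullet> (w - ?u) = - ?N * ((\<Sum>i\<in>UNIV. tau i * util v i (y i)) - (\<Sum>i\<in>UNIV. tau i * util v i (z i)))"
      unfolding g_def w by (rule inner_comp[OF b_neg uneg tau])
    moreover have "(\<Sum>i\<in>UNIV. tau i * util v i (y i)) - (\<Sum>i\<in>UNIV. tau i * util v i (z i)) \<le> 0"
      using opt ay by simp
    ultimately show "g \<bullet> (w - ?u) \<ge> 0" using Npos by (simp add: mult_nonneg_nonpos less_imp_le)
  qed
  have "?u \<in> utility_set v" unfolding utility_set_def using alloc by blast
  then show "critical_point (nash_product b) (utility_set v) ?u"
    unfolding critical_point_def using un d gnz sup by blast
qed

lemma keyineq:
  fixes A A' v1 v2 v3 v4 :: real
  assumes "A > 0" "A' > 0" "A * v1 < A' * v2" "A' * v4 \<le> A * v3" "v1 < 0" "v2 < 0" "v3 < 0" "v4 < 0"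
  shows "v2 * v3 < v1 * v4"
proof -
  have "(- (A' * v2)) * (- (A * v3)) < (- (A * v1)) * (- (A' * v4))"
    using assms by (intro mult_less_le_imp_less) (auto simp: mult_pos_neg mult_pos_neg less_imp_le mult_nonneg_nonpos)
  then have "(A * A') * (v2 * v3) < (A * A') * (v1 * v4)" by (simp add: algebra_simps)
  then show ?thesis using assms by simp
qed

lemma min_cond2:
  fixes v :: "'n::finite \<Rightarrow> 'm::finite \<Rightarrow> real"
  assumes alloc: "allocation z" and zij: "z i j > 0"
    and opt: "\<forall>y. allocation y \<longrightarrow>
                   (\<Sum>i\<in>UNIV. tau i * util v i (z i)) \<le> (\<Sum>i\<in>UNIV. tau i * util v i (y i))"
  shows "tau i * v i j \<le> tau i' * v i' j"
proof -
  have "allocation (shift z i j i' (z i j))" using alloc zij by (intro shift_alloc) auto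
  then have "(\<Sum>k\<in>UNIV. tau k * util v k (z k)) \<le> (\<Sum>k\<in>UNIV. tau k * util v k (shift z i j i' (z i j) k))"
    using opt by blast
  then have "0 \<le> z i j * (tau i' * v i' j - tau i * v i j)" by (simp add: shift_W)
  then show ?thesis using zij by (simp add: zero_le_mult_iff)
qed

lemma stepE_min:
  fixes v :: "'n::finite \<Rightarrow> 'm::finite \<Rightarrow> real"
  assumes v_neg: "\<forall>i j. v i j < 0" and alloc: "allocation z"
    and uneg: "\<forall>i. util v i (z i) < 0" and taupos: "\<forall>i. tau i > 0"
    and par: "\<not> (\<exists>y. allocation y \<and> (\<forall>i. util v i (y i) \<ge> util v i (z i)) \<and> (\<exists>i. util v i (y i) > util v i (z i)))"
    and opt: "\<forall>y. allocation y \<longrightarrow>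
                   (\<Sum>i\<in>UNIV. tau i * util v i (z i)) \<le> (\<Sum>i\<in>UNIV. tau i * util v i (y i))"
  shows "\<forall>i j. z i j > 0 \<longrightarrow> (\<forall>i'. tau i' * v i' j \<le> tau i * v i j)"
proof (intro allI impI, rule ccontr)
  fix i j i' assume zij: "z i j > 0" and nle: "\<not> tau i' * v i' j \<le> tau i * v i j"
  then have lt: "tau i * v i j < tau i' * v i' j" by simp
  have ii: "i \<noteq> i'" using lt by auto
  have z0: "\<forall>k l. z k l \<ge> 0" using alloc by (simp add: allocation_def)
  obtain j' where zj': "z i' j' > 0"
    using ex_pos[of "z i'" v i'] z0 uneg by (metis less_irrefl)
  have m1: "tau i' * v i' j' \<le> tau i * v i j'" by (rule min_cond2[OF alloc zj' opt])
  have jj: "j \<noteq> j'"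
  proof
    assume "j = j'"
    then have "tau i' * v i' j \<le> tau i * v i j" using m1 by simp
    then show False using lt by simp
  qed
  have key: "v i' j * v i j' < v i j * v i' j'"
    by (rule keyineq[of "tau i" "tau i'"]) (use taupos lt m1 v_neg in auto)
  define a where "a = z i j"
  define c where "c = z i' j'"
  define K where "K = c * (- v i' j') + a * (- v i' j)"
  define e where "e = a * c * (- v i' j') / K"
  define d where "d = a * c * (- v i' j) / K"
  have a0: "a > 0" and c0: "c > 0" using zij zj' by (auto simp: a_def c_def)
  have p4: "- v i' j' > 0" and p2: "- v i' j > 0" using v_neg by auto
  have K0: "K > 0" unfolding K_def using a0 c0 p4 p2 by (intro add_pos_pos mult_pos_pos)
  have e0: "e \<ge> 0" unfolding e_def using a0 c0 p4 K0 by (intro divide_nonneg_pos mult_nonneg_nonneg) auto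
  have d0: "d \<ge> 0" unfolding d_def using a0 c0 p2 K0 by (intro divide_nonneg_pos mult_nonneg_nonneg) auto
  have ea: "e \<le> a"
  proof -
    have h: "a * (a * (- v i' j)) \<ge> 0" using a0 p2 by (intro mult_nonneg_nonneg) auto
    have hh: "a * c * (- v i' j') \<le> a * K" unfolding K_def using h
      by (simp add: algebra_simps)
    show ?thesis unfolding e_def pos_divide_le_eq[OF K0] by (rule hh)
  qed
  have dc: "d \<le> c"
  proof -
    have h: "c * (c * (- v i' j')) \<ge> 0" using c0 p4 by (intro mult_nonneg_nonneg) auto
    have hh: "a * c * (- v i' j) \<le> c * K" unfolding K_def using h
      by (simp add: algebra_simps)
    show ?thesis unfolding d_def pos_divide_le_eq[OF K0] by (rule hh)
  qed
  define y1 where "y1 = shift z i j i' e"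
  define y where "y = shift y1 i' j' i d"
  have ay1: "allocation y1" unfolding y1_def using alloc e0 ea by (intro shift_alloc) (auto simp: a_def)
  have y1c: "y1 i' j' = c" unfolding y1_def shift_def c_def using jj by simp
  have ay: "allocation y" unfolding y_def using ay1 d0 dc y1c by (intro shift_alloc) auto
  have uy: "util v k (y k) = util v k (z k) + e * ((if k = i' then v i' j else 0) - (if k = i then v i j else 0))
      + d * ((if k = i then v i j' else 0) - (if k = i' then v i' j' else 0))" for k
    unfolding y_def y1_def by (simp add: shift_util)
  have gi': "e * v i' j - d * v i' j' = 0" unfolding e_def d_def by (simp add: field_simps)
  have gi: "e * (- v i j) + d * v i j' = (a * c / K) * (v i j * v i' j' - v i' j * v i j')"
    unfolding e_def d_def using K0 by (simp add: field_simps)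
  have gip: "e * (- v i j) + d * v i j' > 0" unfolding gi using a0 c0 K0 key by simp
  have ge: "\<forall>k. util v k (y k) \<ge> util v k (z k)"
  proof
    fix k show "util v k (y k) \<ge> util v k (z k)"
      using gi' gip ii unfolding uy by (cases "k = i"; cases "k = i'") auto
  qed
  have gt: "util v i (y i) > util v i (z i)"
    using gip ii unfolding uy by simp
  show False using par ay ge gt by blast
qed

lemma stepE:
  fixes v :: "'n::finite \<Rightarrow> 'm::finite \<Rightarrow> real"
  assumes v_neg: "\<forall>i j. v i j < 0" and b_neg: "\<forall>i. b i < 0" and alloc: "allocation z"
    and uneg: "\<forall>i. util v i (z i) < 0"
    and tau: "tau = (\<lambda>i. b i / util v i (z i))"
    and front: "uprof v z \<in> pareto_frontier v"
    and crit: "critical_point (nash_product b) (utility_set v) (uprof v z)"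
  shows "\<forall>i j. z i j > 0 \<longrightarrow> (\<forall>i'. v i j * b i / util v i (z i) \<ge> v i' j * b i' / util v i' (z i'))"
proof -
  have taupos: "\<forall>i. tau i > 0" unfolding tau using b_neg uneg by (simp add: divide_neg_neg)
  obtain z' where eq: "uprof v z = uprof v z'" and po: "pareto_optimal v z'"
    using front unfolding pareto_frontier_def by blast
  have ueq: "util v i (z i) = util v i (z' i)" for i using eq by (metis uprof_nth)
  have par: "\<not> (\<exists>y. allocation y \<and> (\<forall>i. util v i (y i) \<ge> util v i (z i)) \<and> (\<exists>i. util v i (y i) > util v i (z i)))"
    using po unfolding pareto_optimal_def ueq by blast
  let ?u = "uprof v z"
  let ?N = "nash_product b ?u"
  have un: "\<forall>i. ?u $ i < 0" using uneg by simp
  have Npos: "?N > 0" unfolding nash_product_def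
  proof (intro prod_pos)
    fix i show "0 < \<bar>?u $ i\<bar> powr \<bar>b i\<bar>" using un[rule_format, of i] by (simp add: powr_gt_zero)
  qed
  define g0 where "g0 = (\<chi> i. ?N * \<bar>b i\<bar> / ?u $ i)"
  have d0: "(nash_product b has_derivative (\<lambda>h. g0 \<bullet> h)) (at ?u)" unfolding g0_def by (rule nash_deriv[OF un])
  obtain g where d: "(nash_product b has_derivative (\<lambda>h. g \<bullet> h)) (at ?u)"
    and disj: "(\<forall>w\<in>utility_set v. g \<bullet> (w - ?u) \<le> 0) \<or> (\<forall>w\<in>utility_set v. g \<bullet> (w - ?u) \<ge> 0)"
    using crit unfolding critical_point_def by blast
  have "(\<lambda>h. g \<bullet> h) = (\<lambda>h. g0 \<bullet> h)" by (rule has_derivative_unique[OF d d0])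
  then have "g \<bullet> (g - g0) = g0 \<bullet> (g - g0)" by metis
  then have "(g - g0) \<bullet> (g - g0) = 0" by (simp add: inner_diff_left)
  then have gg: "g = g0" by simp
  have comp: "g \<bullet> (uprof v y - ?u) = - ?N * ((\<Sum>i\<in>UNIV. tau i * util v i (y i)) - (\<Sum>i\<in>UNIV. tau i * util v i (z i)))" for y
    unfolding gg g0_def by (rule inner_comp[OF b_neg uneg tau])
  have inU: "uprof v y \<in> utility_set v" if "allocation y" for y
    unfolding utility_set_def using that by blast
  from disj show ?thesis
  proof
    assume H: "\<forall>w\<in>utility_set v. g \<bullet> (w - ?u) \<le> 0"
    have opt: "\<forall>y. allocation y \<longrightarrow>
                   (\<Sum>i\<in>UNIV. tau i * util v i (z i)) \<le> (\<Sum>i\<in>UNIV. tau i * util v i (y i))"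
    proof (intro allI impI)
      fix y :: "'n \<Rightarrow> 'm \<Rightarrow> real" assume ay: "allocation y"
      have "- ?N * ((\<Sum>i\<in>UNIV. tau i * util v i (y i)) - (\<Sum>i\<in>UNIV. tau i * util v i (z i))) \<le> 0"
      proof -
        have F: "g \<bullet> (uprof v y - ?u) \<le> 0" using H inU[OF ay] by blast
        show ?thesis using F unfolding comp[of y] .
      qed
      then show "(\<Sum>i\<in>UNIV. tau i * util v i (z i)) \<le> (\<Sum>i\<in>UNIV. tau i * util v i (y i))"
        using Npos by (simp add: zero_le_mult_iff)
    qed
    have "\<forall>i j. z i j > 0 \<longrightarrow> (\<forall>i'. tau i' * v i' j \<le> tau i * v i j)"
      by (rule stepE_min[OF v_neg alloc uneg taupos par opt])
    then show ?thesis unfolding tau by (simp add: mult.commute)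
  next
    assume H: "\<forall>w\<in>utility_set v. g \<bullet> (w - ?u) \<ge> 0"
    have opt: "\<forall>y. allocation y \<longrightarrow>
                   (\<Sum>i\<in>UNIV. tau i * util v i (y i)) \<le> (\<Sum>i\<in>UNIV. tau i * util v i (z i))"
    proof (intro allI impI)
      fix y :: "'n \<Rightarrow> 'm \<Rightarrow> real" assume ay: "allocation y"
      have "- ?N * ((\<Sum>i\<in>UNIV. tau i * util v i (y i)) - (\<Sum>i\<in>UNIV. tau i * util v i (z i))) \<ge> 0"
      proof -
        have F: "g \<bullet> (uprof v y - ?u) \<ge> 0" using H inU[OF ay] by blast
        show ?thesis using F unfolding comp[of y] .
      qed
      then show "(\<Sum>i\<in>UNIV. tau i * util v i (y i)) \<le> (\<Sum>i\<in>UNIV. tau i * util v i (z i))"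
        using Npos by (simp add: mult_le_0_iff)
    qed
    show ?thesis by (rule stepC2[OF alloc tau opt])
  qed
qed

theorem proposition7:
  fixes v :: "'n::finite \<Rightarrow> 'm::finite \<Rightarrow> real"
    and b :: "'n \<Rightarrow> real"
    and z :: "'n \<Rightarrow> 'm \<Rightarrow> real"
  assumes v_neg: "\<forall>i j. v i j < 0"
    and b_neg: "\<forall>i. b i < 0"
    and alloc: "allocation z"
  defines "tau \<equiv> (\<lambda>i. b i / util v i (z i))"
  shows "(competitive v b z
           \<longleftrightarrow> ((\<forall>i. util v i (z i) < 0) \<and>
                (\<forall>i j. z i j > 0 \<longrightarrow> (\<forall>i'. v i j * b i / util v i (z i)
                                              \<ge> v i' j * b i' / util v i' (z i')))))
       \<and> (competitive v b z
           \<longleftrightarrow> ((\<forall>i. util v i (z i) < 0) \<and>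
                (\<forall>y. allocation y \<longrightarrow>
                   (\<Sum>i\<in>UNIV. tau i * util v i (y i)) \<le> (\<Sum>i\<in>UNIV. tau i * util v i (z i)))))
       \<and> (competitive v b z
           \<longleftrightarrow> ((\<forall>i. util v i (z i) < 0) \<and> uprof v z \<in> pareto_frontier v \<and>
                critical_point (nash_product b) (utility_set v) (uprof v z)))"
proof -
  have tau: "tau = (\<lambda>i. b i / util v i (z i))" by (simp add: tau_def)
  let ?C2 = "(\<forall>i. util v i (z i) < 0) \<and>
                (\<forall>i j. z i j > 0 \<longrightarrow> (\<forall>i'. v i j * b i / util v i (z i)
                                              \<ge> v i' j * b i' / util v i' (z i')))"
  have e1: "competitive v b z \<longleftrightarrow> ?C2"
    using stepA[OF v_neg b_neg] stepB[OF v_neg b_neg alloc] by blast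
  have e2: "?C2 \<longleftrightarrow> ((\<forall>i. util v i (z i) < 0) \<and>
                (\<forall>y. allocation y \<longrightarrow>
                   (\<Sum>i\<in>UNIV. tau i * util v i (y i)) \<le> (\<Sum>i\<in>UNIV. tau i * util v i (z i))))"
    using stepC1[OF v_neg b_neg alloc _ _ tau] stepC2[OF alloc tau] by blast
  have e3: "?C2 \<longleftrightarrow> ((\<forall>i. util v i (z i) < 0) \<and> uprof v z \<in> pareto_frontier v \<and>
                critical_point (nash_product b) (utility_set v) (uprof v z))"
    using stepC1[OF v_neg b_neg alloc _ _ tau] stepD[OF v_neg b_neg alloc _ tau]
      stepE[OF v_neg b_neg alloc _ tau] by blast
  show ?thesis using e1 e2 e3 by blast
qed

end
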